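(* Let $\theta>0$, and for $n\in\mathbb{N}$ let $J_n\subset\{1,\dots,n\}$ be arbitrary. Define for $l\ge1$ \[ \upsilon_n(l):=\theta^l\sum_{\substack{j_1,\dots,j_l\in J_n\\ j_1+\cdots+j_l<n}}\frac{1}{j_1\cdots j_l}\Big(1-\frac{j_1+\cdots+j_l}{n}\Big)^{\theta-1}. \] If $\theta\ge1$, then $\upsilon_n(l)\le\upsilon_n(1)^l$ for all $n,l\in\mathbb{N}$. If $\theta<1$, then there is a constant $C>0$ depending only on $\theta$ such that $\upsilon_n(l)\le C^l(\upsilon_n(1)+1)^l$ for all $n,l\in\mathbb{N}$. *)

theory Defs
  imports "HOL-Analysis.Analysis"
begin

definition upsilon :: "real \<Rightarrow> nat set \<Rightarrow> nat \<Rightarrow> nat \<Rightarrow> real" where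
  "upsilon \<theta> J n l =
     \<theta> ^ l * (\<Sum>js \<in> {js. length js = l \<and> set js \<subseteq> J \<and> sum_list js < n}.
        (1 / real (prod_list js)) * (1 - real (sum_list js) / real n) powr (\<theta> - 1))"

end

theory Submission
  imports Defs
begin

definition LL :: "nat set \<Rightarrow> nat \<Rightarrow> nat \<Rightarrow> nat list set" where
  "LL J l M = {js. length js = l \<and> set js \<subseteq> J \<and> sum_list js < M}"

definition W :: "real \<Rightarrow> nat set \<Rightarrow> nat \<Rightarrow> nat \<Rightarrow> nat \<Rightarrow> real" where
  "W \<theta> J n l M = (\<Sum>js\<in>LL J l M. (1 / real (prod_list js)) *
       ((real M - real (sum_list js)) / real n) powr (\<theta> - 1))"

lemma LL_finite: "finite (LL J l M)"
proof (rule finite_subset[OF _ finite_lists_length_eq[of "{..<M}" l]])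
  show "LL J l M \<subseteq> {xs. set xs \<subseteq> {..<M} \<and> length xs = l}"
    unfolding LL_def using member_le_sum_list by fastforce
qed simp

lemma LL_Suc: "LL J (Suc l) M = (\<lambda>(j,js). j # js) ` (SIGMA j:{j\<in>J. j<M}. LL J l (M - j))"
proof (rule set_eqI, rule iffI)
  fix xs assume "xs \<in> LL J (Suc l) M"
  then obtain j js where "xs = j # js" "length js = l" "j \<in> J" "set js \<subseteq> J" "j + sum_list js < M"
    unfolding LL_def by (cases xs) auto
  then show "xs \<in> (\<lambda>(j,js). j # js) ` (SIGMA j:{j\<in>J. j<M}. LL J l (M - j))"
    unfolding LL_def by (auto intro!: image_eqI[where x="(j,js)"])
qed (auto simp: LL_def)

lemma W_0: "W \<theta> J n 0 M = (if 0 < M then (real M / real n) powr (\<theta> - 1) else 0)"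
proof -
  have "LL J 0 M = (if 0 < M then {[]} else {})" by (auto simp: LL_def)
  thus ?thesis by (simp add: W_def)
qed

lemma W_Suc: "W \<theta> J n (Suc l) M = (\<Sum>j\<in>{j\<in>J. j<M}. (1 / real j) * W \<theta> J n l (M - j))"
proof -
  let ?f = "\<lambda>js. (1 / real (prod_list js)) * ((real M - real (sum_list js)) / real n) powr (\<theta> - 1)"
  have inj: "inj_on (\<lambda>(j,js). j # js) (SIGMA j:{j\<in>J. j<M}. LL J l (M - j))"
    by (auto simp: inj_on_def)
  have "W \<theta> J n (Suc l) M = (\<Sum>p\<in>(SIGMA j:{j\<in>J. j<M}. LL J l (M - j)). ?f ((\<lambda>(j,js). j # js) p))"
    unfolding W_def LL_Suc by (subst sum.reindex[OF inj]) (simp add: comp_def)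
  also have "\<dots> = (\<Sum>j\<in>{j\<in>J. j<M}. \<Sum>js\<in>LL J l (M - j). ?f (j # js))"
    by (subst sum.Sigma) (auto simp: LL_finite split_def)
  also have "\<dots> = (\<Sum>j\<in>{j\<in>J. j<M}. (1 / real j) * W \<theta> J n l (M - j))"
    unfolding W_def sum_distrib_left
  proof (rule sum.cong[OF refl], rule sum.cong[OF refl])
    fix j js assume "j \<in> {j\<in>J. j<M}" "js \<in> LL J l (M - j)"
    hence "j < M" by auto
    thus "?f (j # js) = 1 / real j * (1 / real (prod_list js) *
          ((real (M - j) - real (sum_list js)) / real n) powr (\<theta> - 1))"
      by (simp add: of_nat_diff algebra_simps)
  qed
  finally show ?thesis .
qed

lemma W_nonneg: "W \<theta> J n l M \<ge> 0"
  unfolding W_def by (intro sum_nonneg mult_nonneg_nonneg) auto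

lemma W_bound_ge1:
  assumes th: "\<theta> \<ge> 1" and J: "J \<subseteq> {1..n}" and M: "M \<le> n"
  defines "D \<equiv> (\<Sum>j\<in>{j\<in>J. j<n}. (1 / real j) * ((real n - real j) / real n) powr (\<theta> - 1))"
  shows "W \<theta> J n l M \<le> D ^ l * (real M / real n) powr (\<theta> - 1)"
  using M
proof (induction l arbitrary: M)
  case 0 thus ?case by (simp add: W_0)
next
  case (Suc l)
  have D0: "D \<ge> 0" unfolding D_def by (intro sum_nonneg mult_nonneg_nonneg) auto
  have "W \<theta> J n (Suc l) M = (\<Sum>j\<in>{j\<in>J. j<M}. (1 / real j) * W \<theta> J n l (M - j))"
    by (rule W_Suc)
  also have "\<dots> \<le> (\<Sum>j\<in>{j\<in>J. j<M}. (1 / real j) * (D ^ l * (real (M - j) / real n) powr (\<theta> - 1)))"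
    by (intro sum_mono mult_left_mono Suc.IH) (use Suc.prems in auto)
  also have "\<dots> \<le> (\<Sum>j\<in>{j\<in>J. j<M}. (1 / real j) * (D ^ l * (((real n - real j) / real n) powr (\<theta> - 1) * (real M / real n) powr (\<theta> - 1))))"
  proof (intro sum_mono mult_left_mono)
    fix j assume j: "j \<in> {j\<in>J. j<M}"
    have "real (M - j) / real n \<le> (real n - real j) / real n * (real M / real n)"
    proof (cases "n = 0")
      case False
      hence "real (M - j) / real n = (real n * real M - real n * real j) / (real n * real n)"
        using j by (simp add: of_nat_diff field_simps)
      also have "\<dots> \<le> (real n * real M - real M * real j) / (real n * real n)"
        using Suc.prems by (intro divide_right_mono) (auto intro: mult_right_mono)
      also have "\<dots> = (real n - real j) / real n * (real M / real n)"
        by (simp add: field_simps)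
      finally show ?thesis .
    qed simp
    hence "(real (M - j) / real n) powr (\<theta> - 1) \<le> ((real n - real j) / real n * (real M / real n)) powr (\<theta> - 1)"
      by (intro powr_mono2) (use th in auto)
    also have "\<dots> = ((real n - real j) / real n) powr (\<theta> - 1) * (real M / real n) powr (\<theta> - 1)"
      by (rule powr_mult)
    finally show "(real (M - j) / real n) powr (\<theta> - 1) \<le> \<dots>" .
  qed (use D0 in auto)
  also have "\<dots> = D ^ l * (real M / real n) powr (\<theta> - 1) * (\<Sum>j\<in>{j\<in>J. j<M}. (1 / real j) * ((real n - real j) / real n) powr (\<theta> - 1))"
    by (simp add: sum_distrib_left algebra_simps)
  also have "\<dots> \<le> D ^ l * (real M / real n) powr (\<theta> - 1) * D"
  proof (intro mult_left_mono)
    show "(\<Sum>j\<in>{j\<in>J. j<M}. (1 / real j) * ((real n - real j) / real n) powr (\<theta> - 1)) \<le> D"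
      unfolding D_def by (intro sum_mono2) (use Suc.prems in auto)
  qed (use D0 in auto)
  finally show ?case by (simp add: algebra_simps)
qed

lemma step_ineq:
  fixes \<theta> x :: real
  assumes "0 < \<theta>" "\<theta> < 1" "x \<ge> 1"
  shows "\<theta> * x powr (\<theta> - 1) \<le> x powr \<theta> - (x - 1) powr \<theta>"
proof (cases "x = 1")
  case True then show ?thesis using assms by simp
next
  case False
  hence x1: "x - 1 < x" "x - 1 > 0" using assms by auto
  have "\<exists>z. x - 1 < z \<and> z < x \<and> (x powr \<theta> - (x-1) powr \<theta> = (x - (x-1)) * (\<theta> * z powr (\<theta> - 1)))"
    by (rule MVT2[OF x1(1)]) (use x1 in \<open>auto intro!: has_real_derivative_powr\<close>)
  then obtain z where z: "x - 1 < z" "z < x" "x powr \<theta> - (x-1) powr \<theta> = \<theta> * z powr (\<theta> - 1)" by auto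
  have "x powr (\<theta> - 1) \<le> z powr (\<theta> - 1)"
    by (rule powr_mono2') (use assms z x1 in auto)
  thus ?thesis using z assms by simp
qed

lemma sum_bound:
  fixes \<theta> :: real
  assumes "0 < \<theta>" "\<theta> < 1"
  shows "(\<Sum>i<N. real (Suc i) powr (\<theta> - 1)) \<le> real N powr \<theta> / \<theta>"
proof (induction N)
  case 0 then show ?case using assms by simp
next
  case (Suc N)
  have "\<theta> * real (Suc N) powr (\<theta> - 1) \<le> real (Suc N) powr \<theta> - (real (Suc N) - 1) powr \<theta>"
    by (rule step_ineq) (use assms in auto)
  hence "real (Suc N) powr (\<theta> - 1) \<le> (real (Suc N) powr \<theta> - real N powr \<theta>) / \<theta>"
    using assms by (simp add: field_simps)
  with Suc show ?case by (simp add: diff_divide_distrib)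
qed

lemma key_sum:
  assumes th: "0 < \<theta>" "\<theta> < 1" and J: "J \<subseteq> {1..n}" and M: "1 \<le> M" "M \<le> n"
  defines "B \<equiv> (\<Sum>j\<in>{j\<in>J. j<n}. 1 / real j)"
  shows "(\<Sum>j\<in>{j\<in>J. j<M}. (1 / real j) * real (M - j) powr (\<theta> - 1))
         \<le> (2 * B + 2 / \<theta>) * real M powr (\<theta> - 1)"
proof -
  let ?e = "\<theta> - 1"
  have pt: "(1 / real j) * real (M - j) powr ?e \<le> 2 * (1 / real j) * real M powr ?e
            + (2 / real M) * real (M - j) powr ?e" if j: "j \<in> J" "j < M" for j
  proof (cases "2 * j < M")
    case True
    have "real (M - j) powr ?e \<le> (real M / 2) powr ?e"
      by (rule powr_mono2') (use th True M j in \<open>auto simp: of_nat_diff\<close>)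
    also have "\<dots> = real M powr ?e / 2 powr ?e" by (rule powr_divide)
    also have "\<dots> \<le> 2 * real M powr ?e"
    proof -
      have "2 powr (-1) \<le> 2 powr ?e" by (rule powr_mono) (use th in auto)
      hence "1/2 \<le> 2 powr ?e" by (simp add: powr_minus)
      hence "1 \<le> 2 * 2 powr ?e" by simp
      hence "real M powr ?e * 1 \<le> real M powr ?e * (2 * 2 powr ?e)"
        by (intro mult_left_mono) auto
      thus ?thesis by (simp add: field_simps)
    qed
    finally have "(1 / real j) * real (M - j) powr ?e \<le> (1 / real j) * (2 * real M powr ?e)"
      by (intro mult_left_mono) auto
    hence "(1 / real j) * real (M - j) powr ?e \<le> 2 * (1 / real j) * real M powr ?e"
      by (simp only: ac_simps)
    moreover have "0 \<le> (2 / real M) * real (M - j) powr ?e" by simp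
    ultimately show ?thesis by linarith
  next
    case False
    have "j \<ge> 1" using j J by auto
    have "real M \<le> 2 * real j" using False by linarith
    hence "1 / real j \<le> 2 / real M" using M \<open>j \<ge> 1\<close> by (simp add: field_simps)
    hence "(1 / real j) * real (M - j) powr ?e \<le> (2 / real M) * real (M - j) powr ?e"
      by (intro mult_right_mono) auto
    moreover have "0 \<le> 2 * (1 / real j) * real M powr ?e" by simp
    ultimately show ?thesis by linarith
  qed
  have "(\<Sum>j\<in>{j\<in>J. j<M}. (1 / real j) * real (M - j) powr ?e)
     \<le> (\<Sum>j\<in>{j\<in>J. j<M}. 2 * (1 / real j) * real M powr ?e + (2 / real M) * real (M - j) powr ?e)"
    by (intro sum_mono pt) auto
  also have "\<dots> = 2 * real M powr ?e * (\<Sum>j\<in>{j\<in>J. j<M}. 1 / real j)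
       + (2 / real M) * (\<Sum>j\<in>{j\<in>J. j<M}. real (M - j) powr ?e)"
    by (simp add: sum.distrib sum_distrib_left algebra_simps)
  also have "\<dots> \<le> 2 * real M powr ?e * B + (2 / real M) * (\<Sum>j<M. real (M - j) powr ?e)"
  proof (intro add_mono mult_left_mono)
    show "(\<Sum>j\<in>{j\<in>J. j<M}. 1 / real j) \<le> B"
      unfolding B_def by (intro sum_mono2) (use M in auto)
    show "(\<Sum>j\<in>{j\<in>J. j<M}. real (M - j) powr ?e) \<le> (\<Sum>j<M. real (M - j) powr ?e)"
      by (intro sum_mono2) auto
  qed auto
  also have "(\<Sum>j<M. real (M - j) powr ?e) = (\<Sum>i<M. real (Suc i) powr ?e)"
  proof -
    have "(\<Sum>j<M. real (M - j) powr ?e) = (\<Sum>j<M. (\<lambda>i. real (Suc i) powr ?e) (M - Suc j))"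
      by (intro sum.cong) (auto simp: Suc_diff_Suc)
    also have "\<dots> = (\<Sum>i<M. real (Suc i) powr ?e)" by (rule sum.nat_diff_reindex)
    finally show ?thesis .
  qed
  also have "(2 / real M) * (\<Sum>i<M. real (Suc i) powr ?e) \<le> (2 / real M) * (real M powr \<theta> / \<theta>)"
    by (intro mult_left_mono sum_bound th) auto
  also have "real M powr \<theta> = real M * real M powr ?e"
    using M by (simp add: powr_diff)
  also have "2 * real M powr ?e * B + 2 / real M * (real M * real M powr ?e / \<theta>)
      = (2 * B + 2 / \<theta>) * real M powr ?e"
    using M by (simp add: field_simps)
  finally show ?thesis by simp
qed

lemma W_bound_lt1:
  assumes th: "0 < \<theta>" "\<theta> < 1" and J: "J \<subseteq> {1..n}" and M: "M \<le> n"
  defines "B \<equiv> (\<Sum>j\<in>{j\<in>J. j<n}. 1 / real j)"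
  shows "W \<theta> J n l M \<le> (2 * B + 2 / \<theta>) ^ l * (real M / real n) powr (\<theta> - 1)"
  using M
proof (induction l arbitrary: M)
  case 0 thus ?case by (simp add: W_0)
next
  case (Suc l)
  let ?K = "2 * B + 2 / \<theta>" and ?e = "\<theta> - 1"
  have "B \<ge> 0" unfolding B_def by (intro sum_nonneg) auto
  hence K0: "?K \<ge> 0" using th by simp
  show ?case
  proof (cases "M = 0")
    case True thus ?thesis by (simp add: W_Suc)
  next
    case False
    have n0: "real n > 0" using False Suc.prems by auto
    have "W \<theta> J n (Suc l) M = (\<Sum>j\<in>{j\<in>J. j<M}. (1 / real j) * W \<theta> J n l (M - j))"
      by (rule W_Suc)
    also have "\<dots> \<le> (\<Sum>j\<in>{j\<in>J. j<M}. (1 / real j) * (?K ^ l * (real (M - j) / real n) powr ?e))"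
      by (intro sum_mono mult_left_mono Suc.IH) (use Suc.prems in auto)
    also have "\<dots> = ?K ^ l / real n powr ?e * (\<Sum>j\<in>{j\<in>J. j<M}. (1 / real j) * real (M - j) powr ?e)"
      by (simp add: powr_divide sum_distrib_left algebra_simps)
    also have "\<dots> \<le> ?K ^ l / real n powr ?e * (?K * real M powr ?e)"
    proof (rule mult_left_mono)
      show "(\<Sum>j\<in>{j\<in>J. j<M}. (1 / real j) * real (M - j) powr ?e) \<le> ?K * real M powr ?e"
        unfolding B_def by (rule key_sum[OF th J]) (use False Suc.prems in auto)
    qed (use K0 in auto)
    also have "\<dots> = ?K ^ Suc l * (real M / real n) powr ?e"
      by (simp add: powr_divide algebra_simps)
    finally show ?thesis .
  qed
qed

lemma upsilon_W:
  assumes "n \<ge> 1"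
  shows "upsilon \<theta> J n l = \<theta> ^ l * W \<theta> J n l n"
  unfolding upsilon_def W_def LL_def
  using assms by (intro arg_cong2[where f="(*)"] refl sum.cong) (auto simp: diff_divide_distrib)

lemma upsilon_1:
  assumes "n \<ge> 1"
  shows "upsilon \<theta> J n 1 = \<theta> * (\<Sum>j\<in>{j\<in>J. j<n}. (1 / real j) * ((real n - real j) / real n) powr (\<theta> - 1))"
proof -
  have "W \<theta> J n 1 n = (\<Sum>j\<in>{j\<in>J. j<n}. (1 / real j) * W \<theta> J n 0 (n - j))"
    using W_Suc[where l=0] by simp
  also have "\<dots> = (\<Sum>j\<in>{j\<in>J. j<n}. (1 / real j) * ((real n - real j) / real n) powr (\<theta> - 1))"
    by (intro sum.cong refl) (auto simp: W_0 of_nat_diff)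
  finally show ?thesis using upsilon_W[OF assms, of \<theta> J 1] by simp
qed

theorem lemma4:
  fixes \<theta> :: real
  assumes "\<theta> > 0"
  shows "(\<theta> \<ge> 1 \<longrightarrow>
            (\<forall>J :: nat \<Rightarrow> nat set. (\<forall>n. J n \<subseteq> {1..n}) \<longrightarrow>
               (\<forall>n l. n \<ge> 1 \<longrightarrow> l \<ge> 1 \<longrightarrow>
                  upsilon \<theta> (J n) n l \<le> (upsilon \<theta> (J n) n 1) ^ l)))
       \<and> (\<theta> < 1 \<longrightarrow>
            (\<exists>C > 0. \<forall>J :: nat \<Rightarrow> nat set. (\<forall>n. J n \<subseteq> {1..n}) \<longrightarrow>
               (\<forall>n l. n \<ge> 1 \<longrightarrow> l \<ge> 1 \<longrightarrow>
                  upsilon \<theta> (J n) n l \<le> C ^ l * (upsilon \<theta> (J n) n 1 + 1) ^ l)))"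
proof (intro conjI impI)
  assume th: "\<theta> \<ge> 1"
  show "\<forall>J :: nat \<Rightarrow> nat set. (\<forall>n. J n \<subseteq> {1..n}) \<longrightarrow>
               (\<forall>n l. n \<ge> 1 \<longrightarrow> l \<ge> 1 \<longrightarrow>
                  upsilon \<theta> (J n) n l \<le> (upsilon \<theta> (J n) n 1) ^ l)"
  proof (intro allI impI)
    fix J :: "nat \<Rightarrow> nat set" and n l :: nat
    assume J: "\<forall>n. J n \<subseteq> {1..n}" and n: "n \<ge> 1" and "l \<ge> 1"
    define D where "D = (\<Sum>j\<in>{j\<in>J n. j<n}. (1 / real j) * ((real n - real j) / real n) powr (\<theta> - 1))"
    have "W \<theta> (J n) n l n \<le> D ^ l * (real n / real n) powr (\<theta> - 1)"
      unfolding D_def by (rule W_bound_ge1) (use th J in auto)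
    hence "W \<theta> (J n) n l n \<le> D ^ l" using n by simp
    hence "\<theta> ^ l * W \<theta> (J n) n l n \<le> \<theta> ^ l * D ^ l"
      using assms by (intro mult_left_mono) auto
    thus "upsilon \<theta> (J n) n l \<le> (upsilon \<theta> (J n) n 1) ^ l"
      unfolding upsilon_1[OF n] D_def[symmetric] upsilon_W[OF n, of \<theta> _ l] power_mult_distrib .
  qed
next
  assume th: "\<theta> < 1"
  show "\<exists>C > 0. \<forall>J :: nat \<Rightarrow> nat set. (\<forall>n. J n \<subseteq> {1..n}) \<longrightarrow>
               (\<forall>n l. n \<ge> 1 \<longrightarrow> l \<ge> 1 \<longrightarrow>
                  upsilon \<theta> (J n) n l \<le> C ^ l * (upsilon \<theta> (J n) n 1 + 1) ^ l)"
  proof (intro exI[of _ 2] conjI allI impI)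
    fix J :: "nat \<Rightarrow> nat set" and n l :: nat
    assume J: "\<forall>n. J n \<subseteq> {1..n}" and n: "n \<ge> 1" and "l \<ge> 1"
    define B where "B = (\<Sum>j\<in>{j\<in>J n. j<n}. 1 / real j)"
    define D where "D = (\<Sum>j\<in>{j\<in>J n. j<n}. (1 / real j) * ((real n - real j) / real n) powr (\<theta> - 1))"
    have B0: "B \<ge> 0" unfolding B_def by (intro sum_nonneg) auto
    have BD: "B \<le> D" unfolding B_def D_def
    proof (intro sum_mono)
      fix j assume j: "j \<in> {j\<in>J n. j<n}"
      have "1 powr (\<theta> - 1) \<le> ((real n - real j) / real n) powr (\<theta> - 1)"
        by (rule powr_mono2') (use j th J n in auto)
      hence "1 \<le> ((real n - real j) / real n) powr (\<theta> - 1)" by simp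
      thus "1 / real j \<le> (1 / real j) * ((real n - real j) / real n) powr (\<theta> - 1)"
        by (metis mult.right_neutral mult_left_mono of_nat_0_le_iff zero_le_divide_1_iff)
    qed
    have "W \<theta> (J n) n l n \<le> (2 * B + 2 / \<theta>) ^ l * (real n / real n) powr (\<theta> - 1)"
      unfolding B_def by (rule W_bound_lt1) (use th J assms in auto)
    hence "W \<theta> (J n) n l n \<le> (2 * B + 2 / \<theta>) ^ l" using n by simp
    hence "\<theta> ^ l * W \<theta> (J n) n l n \<le> \<theta> ^ l * (2 * B + 2 / \<theta>) ^ l"
      using assms by (intro mult_left_mono) auto
    also have "\<dots> = (2 * \<theta> * B + 2) ^ l"
      using assms by (simp add: power_mult_distrib[symmetric] algebra_simps)
    also have "\<dots> \<le> (2 * (\<theta> * D + 1)) ^ l"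
      using assms B0 BD by (intro power_mono) (auto intro: mult_left_mono)
    finally show "upsilon \<theta> (J n) n l \<le> 2 ^ l * (upsilon \<theta> (J n) n 1 + 1) ^ l"
      unfolding upsilon_1[OF n] D_def[symmetric] upsilon_W[OF n, of \<theta> _ l] power_mult_distrib .
  qed simp
qed

end
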